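(* Let $D=(Q,\Sigma,\delta,q_0,A)$ be an f-minimal DFA, and let $p\in F(D)$ and $q\in Q$ with $L(p)\sim L(q)$. Then $p=q$.
   Context: All DFAs are complete and all states are reachable from the start state. $L\sim L'$ means $L\triangle L'$ is finite; for DFAs, $D\sim D'$ means $L(D)\sim L(D')$. For a state $r$, $L(r)$ is the language recognized by $(Q,\Sigma,\delta,r,A)$. The finite part $F(D)$ is the set of states $r$ such that $\{w\in\Sigma^*:\delta(q_0,w)=r\}$ is finite. A DFA $D$ with state set $Q$ is \emph{f-minimal} if every DFA $D'$ (with state set $Q'$) satisfying $D\sim D'$ has $|Q|\le|Q'|$. *)

theory Defs
  imports Main
begin

record ('q, 'a) dfa =
  states :: "'q set"
  alpha  :: "'a set"
  trans  :: "'q \<Rightarrow> 'a \<Rightarrow> 'q"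
  init   :: "'q"
  accept :: "'q set"

definition delta_hat :: "('q, 'a) dfa \<Rightarrow> 'q \<Rightarrow> 'a list \<Rightarrow> 'q" where
  "delta_hat D r w = foldl (trans D) r w"

definition is_dfa :: "('q, 'a) dfa \<Rightarrow> bool" where
  "is_dfa D \<longleftrightarrow>
     finite (states D) \<and> finite (alpha D) \<and>
     init D \<in> states D \<and> accept D \<subseteq> states D \<and>
     (\<forall>r\<in>states D. \<forall>a\<in>alpha D. trans D r a \<in> states D) \<and>
     (\<forall>r\<in>states D. \<exists>w\<in>lists (alpha D). delta_hat D (init D) w = r)"

definition lang_from :: "('q, 'a) dfa \<Rightarrow> 'q \<Rightarrow> 'a list set" where
  "lang_from D r = {w \<in> lists (alpha D). delta_hat D r w \<in> accept D}"

definition lang :: "('q, 'a) dfa \<Rightarrow> 'a list set" where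
  "lang D = lang_from D (init D)"

definition fequiv :: "'a set \<Rightarrow> 'a set \<Rightarrow> bool" where
  "fequiv L L' \<longleftrightarrow> finite ((L - L') \<union> (L' - L))"

definition finite_part :: "('q, 'a) dfa \<Rightarrow> 'q set" where
  "finite_part D = {r \<in> states D.
     finite {w \<in> lists (alpha D). delta_hat D (init D) w = r}}"

text \<open>f-minimality: competitor DFAs over the same alphabet; their state sets are
  taken in type nat (every finite state set can be encoded there).\<close>
definition f_minimal :: "('q, 'a) dfa \<Rightarrow> bool" where
  "f_minimal D \<longleftrightarrow> is_dfa D \<and>
     (\<forall>D' :: (nat, 'a) dfa. is_dfa D' \<and> alpha D' = alpha D \<and> fequiv (lang D) (lang D')
        \<longrightarrow> card (states D) \<le> card (states D'))"

end

theory Submission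
  imports Defs
begin

lemma dh_nil[simp]: "delta_hat D r [] = r"
  by (simp add: delta_hat_def)

lemma dh_cons[simp]: "delta_hat D r (a#w) = delta_hat D (trans D r a) w"
  by (simp add: delta_hat_def)

lemma dh_append: "delta_hat D r (u@v) = delta_hat D (delta_hat D r u) v"
  by (simp add: delta_hat_def)

lemma dh_closed:
  assumes "is_dfa D" "r \<in> states D" "w \<in> lists (alpha D)"
  shows "delta_hat D r w \<in> states D"
  using assms(2,3)
proof (induction w arbitrary: r rule: list.induct)
  case Nil then show ?case by simp
next
  case (Cons a w)
  then have "trans D r a \<in> states D" using assms(1) unfolding is_dfa_def by auto
  then show ?case using Cons by simp
qed

lemma to_nat_dfa:
  fixes E :: "('q, 'a) dfa"
  assumes E: "is_dfa E"
  shows "\<exists>E'::(nat,'a) dfa. is_dfa E' \<and> alpha E' = alpha E \<and> lang E' = lang E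
           \<and> card (states E') = card (states E)"
proof -
  have fin: "finite (states E)" using E unfolding is_dfa_def by auto
  obtain f where bij: "bij_betw f (states E) {0..<card (states E)}"
    using ex_bij_betw_finite_nat[OF fin] by blast
  have inj: "inj_on f (states E)" using bij bij_betw_def by blast
  define g where "g = inv_into (states E) f"
  define E' where "E' = \<lparr>states = f ` states E, alpha = alpha E,
     trans = (\<lambda>n a. f (trans E (g n) a)), init = f (init E), accept = f ` accept E\<rparr>"
  have key: "delta_hat E' (f r) w = f (delta_hat E r w)"
    if "r \<in> states E" "w \<in> lists (alpha E)" for r w
    using that
  proof (induction w arbitrary: r rule: list.induct)
    case Nil then show ?case by simp
  next
    case (Cons a w)
    have "g (f r) = r" using Cons.prems inj unfolding g_def by simp
    moreover have "trans E r a \<in> states E" using Cons.prems E unfolding is_dfa_def by auto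
    ultimately show ?case using Cons by (simp add: E'_def)
  qed
  have "is_dfa E'"
    unfolding is_dfa_def
  proof (intro conjI ballI)
    show "finite (states E')" using fin by (simp add: E'_def)
    show "finite (alpha E')" using E by (simp add: E'_def is_dfa_def)
    show "init E' \<in> states E'" using E by (simp add: E'_def is_dfa_def)
    show "accept E' \<subseteq> states E'" using E by (auto simp add: E'_def is_dfa_def)
  next
    fix r a assume "r \<in> states E'" "a \<in> alpha E'"
    then obtain s where s: "s \<in> states E" "r = f s" by (auto simp: E'_def)
    then have "g r = s" using inj unfolding g_def by simp
    then show "trans E' r a \<in> states E'" using s \<open>a \<in> alpha E'\<close> E
      by (auto simp: E'_def is_dfa_def)
  next
    fix r assume "r \<in> states E'"
    then obtain s where s: "s \<in> states E" "r = f s" by (auto simp: E'_def)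
    then obtain w where w: "w \<in> lists (alpha E)" "delta_hat E (init E) w = s"
      using E unfolding is_dfa_def by blast
    have "delta_hat E' (init E') w = r"
      using key[of "init E" w] w s E by (simp add: E'_def is_dfa_def)
    then show "\<exists>w\<in>lists (alpha E'). delta_hat E' (init E') w = r"
      using w by (auto simp: E'_def)
  qed
  moreover have "lang E' = lang E"
  proof -
    have "delta_hat E' (init E') w \<in> accept E' \<longleftrightarrow> delta_hat E (init E) w \<in> accept E"
      if "w \<in> lists (alpha E)" for w
    proof -
      have i: "init E \<in> states E" using E unfolding is_dfa_def by auto
      have c: "delta_hat E (init E) w \<in> states E" using dh_closed[OF E i that] .
      have "delta_hat E' (init E') w = f (delta_hat E (init E) w)"
        using key[OF i that] by (simp add: E'_def)
      moreover have "accept E \<subseteq> states E" using E unfolding is_dfa_def by auto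
      ultimately show ?thesis using c inj
        by (simp add: E'_def inj_on_image_mem_iff)
    qed
    then show ?thesis unfolding lang_def lang_from_def by (auto simp: E'_def)
  qed
  moreover have "card (states E') = card (states E)"
    using inj by (simp add: E'_def card_image)
  ultimately show ?thesis by (intro exI[of _ E']) (simp add: E'_def)
qed

definition redir :: "'q \<Rightarrow> 'q \<Rightarrow> 'q \<Rightarrow> 'q" where
  "redir X Y s = (if s = X then Y else s)"

definition mtrans :: "('q, 'a) dfa \<Rightarrow> 'q \<Rightarrow> 'q \<Rightarrow> 'q \<Rightarrow> 'a \<Rightarrow> 'q" where
  "mtrans D X Y r a = redir X Y (trans D r a)"

definition mstates :: "('q, 'a) dfa \<Rightarrow> 'q \<Rightarrow> 'q \<Rightarrow> 'q set" where
  "mstates D X Y = {foldl (mtrans D X Y) (redir X Y (init D)) w | w. w \<in> lists (alpha D)}"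

definition mdfa :: "('q, 'a) dfa \<Rightarrow> 'q \<Rightarrow> 'q \<Rightarrow> ('q, 'a) dfa" where
  "mdfa D X Y = \<lparr>states = mstates D X Y, alpha = alpha D, trans = mtrans D X Y,
     init = redir X Y (init D), accept = (accept D - {X}) \<inter> mstates D X Y\<rparr>"

lemma nonreach_same:
  assumes "\<forall>w\<in>lists (alpha D). delta_hat D r w \<noteq> X" "w \<in> lists (alpha D)"
  shows "foldl (mtrans D X Y) r w = delta_hat D r w"
  using assms
proof (induction w arbitrary: r rule: list.induct)
  case Nil then show ?case by simp
next
  case (Cons a w)
  have "trans D r a \<noteq> X" using Cons.prems(1)[rule_format, of "[a]"] Cons.prems(2) by simp
  moreover have "\<forall>w\<in>lists (alpha D). delta_hat D (trans D r a) w \<noteq> X"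
    using Cons.prems by (metis dh_cons listsE lists.Cons)
  ultimately show ?case using Cons by (simp add: mtrans_def redir_def)
qed

lemma dichotomy:
  assumes nr: "\<forall>w\<in>lists (alpha D). delta_hat D Y w \<noteq> X" and YX: "Y \<noteq> X"
    and "w \<in> lists (alpha D)"
  shows "foldl (mtrans D X Y) (redir X Y r) w = redir X Y (delta_hat D r w) \<or>
    (\<exists>u v. w = u @ v \<and> delta_hat D r u = X \<and> foldl (mtrans D X Y) (redir X Y r) w = delta_hat D Y v)"
  using assms(3)
proof (induction w arbitrary: r rule: list.induct)
  case Nil then show ?case by simp
next
  case (Cons a w)
  show ?case
  proof (cases "r = X")
    case True
    have "foldl (mtrans D X Y) Y (a#w) = delta_hat D Y (a#w)"
      using nonreach_same[OF nr Cons.prems] .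
    then show ?thesis using True
      by (intro disjI2 exI[of _ "[]"] exI[of _ "a#w"]) (simp add: redir_def)
  next
    case False
    then have r: "redir X Y r = r" by (simp add: redir_def)
    have eq: "foldl (mtrans D X Y) (redir X Y r) (a#w) = foldl (mtrans D X Y) (redir X Y (trans D r a)) w"
      using r by (simp add: mtrans_def)
    have wl: "w \<in> lists (alpha D)" using Cons.prems by simp
    from Cons.IH[of "trans D r a", OF wl] show ?thesis
    proof (elim disjE exE conjE)
      assume "foldl (mtrans D X Y) (redir X Y (trans D r a)) w = redir X Y (delta_hat D (trans D r a) w)"
      then show ?thesis using eq by simp
    next
      fix u v assume "w = u @ v" "delta_hat D (trans D r a) u = X"
        "foldl (mtrans D X Y) (redir X Y (trans D r a)) w = delta_hat D Y v"
      then show ?thesis using eq by (intro disjI2 exI[of _ "a#u"] exI[of _ v]) simp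
    qed
  qed
qed


lemma merge_not_minimal:
  assumes D: "is_dfa D" and X: "X \<in> finite_part D" and Y: "Y \<in> states D" and XY: "X \<noteq> Y"
    and eq: "fequiv (lang_from D X) (lang_from D Y)"
    and nr: "\<forall>w\<in>lists (alpha D). delta_hat D Y w \<noteq> X"
  shows "\<not> f_minimal D"
proof
  assume fm: "f_minimal D"
  define E where "E = mdfa D X Y"
  define S where "S = mstates D X Y"
  have XS: "X \<in> states D" using X unfolding finite_part_def by auto
  have YX: "Y \<noteq> X" using XY by simp
  have red: "redir X Y s \<in> states D - {X}" if "s \<in> states D" for s
    using that Y XY by (auto simp: redir_def)
  have run: "foldl (mtrans D X Y) r w \<in> states D - {X}"
    if "r \<in> states D - {X}" "w \<in> lists (alpha D)" for r w
    using that
  proof (induction w arbitrary: r rule: list.induct)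
    case Nil then show ?case by simp
  next
    case (Cons a w)
    have "trans D r a \<in> states D" using Cons.prems D unfolding is_dfa_def by auto
    then have "mtrans D X Y r a \<in> states D - {X}" using red by (simp add: mtrans_def)
    then show ?case using Cons by simp
  qed
  have i0: "init D \<in> states D" using D unfolding is_dfa_def by auto
  have SS: "S \<subseteq> states D - {X}"
    unfolding S_def mstates_def using run red[OF i0] by auto
  have dhE: "delta_hat E r w = foldl (mtrans D X Y) r w" for r w
    by (simp add: delta_hat_def E_def mdfa_def)
  have inS: "foldl (mtrans D X Y) (redir X Y (init D)) w \<in> S" if "w \<in> lists (alpha D)" for w
    using that unfolding S_def mstates_def by blast
  have finS: "finite (states D)" using D unfolding is_dfa_def by auto
  have "is_dfa E"
    unfolding is_dfa_def
  proof (intro conjI ballI)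
    show "finite (states E)" using SS finS by (simp add: E_def mdfa_def S_def[symmetric] finite_subset)
    show "finite (alpha E)" using D by (simp add: E_def mdfa_def is_dfa_def)
    show "init E \<in> states E" using inS[of "[]"] by (simp add: E_def mdfa_def S_def)
    show "accept E \<subseteq> states E" by (auto simp add: E_def mdfa_def)
  next
    fix r a assume r: "r \<in> states E" and a: "a \<in> alpha E"
    then obtain w where w: "w \<in> lists (alpha D)" "r = foldl (mtrans D X Y) (redir X Y (init D)) w"
      by (auto simp: E_def mdfa_def mstates_def)
    have "trans E r a = foldl (mtrans D X Y) (redir X Y (init D)) (w @ [a])"
      using w by (simp add: E_def mdfa_def)
    moreover have "w @ [a] \<in> lists (alpha D)" using w a by (simp add: E_def mdfa_def)
    moreover have "states E = S" by (simp add: E_def mdfa_def S_def)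
    ultimately show "trans E r a \<in> states E" using inS by metis
  next
    fix r assume "r \<in> states E"
    then obtain w where w: "w \<in> lists (alpha D)" "r = foldl (mtrans D X Y) (redir X Y (init D)) w"
      by (auto simp: E_def mdfa_def mstates_def)
    then show "\<exists>w\<in>lists (alpha E). delta_hat E (init E) w = r"
      by (intro bexI[of _ w]) (auto simp: E_def mdfa_def delta_hat_def)
  qed
  have cardE: "card (states E) < card (states D)"
  proof -
    have "card (states E) \<le> card (states D - {X})"
      using SS finS by (simp add: E_def mdfa_def S_def[symmetric] card_mono)
    also have "\<dots> < card (states D)" using finS XS by (rule card_Diff1_less)
    finally show ?thesis .
  qed
  define U where "U = {u \<in> lists (alpha D). delta_hat D (init D) u = X}"
  define Dl where "Dl = (lang_from D X - lang_from D Y) \<union> (lang_from D Y - lang_from D X)"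
  have finU: "finite U" using X unfolding finite_part_def U_def by auto
  have finDl: "finite Dl" using eq unfolding fequiv_def Dl_def .
  have sub: "(lang D - lang E) \<union> (lang E - lang D) \<subseteq> U \<union> (\<lambda>(u,v). u @ v) ` (U \<times> Dl)"
  proof
    fix w assume wd: "w \<in> (lang D - lang E) \<union> (lang E - lang D)"
    then have wl: "w \<in> lists (alpha D)"
      by (auto simp: lang_def lang_from_def E_def mdfa_def)
    have accE: "w \<in> lang E \<longleftrightarrow> foldl (mtrans D X Y) (redir X Y (init D)) w \<in> accept D - {X}"
      using wl inS[OF wl] by (auto simp: lang_def lang_from_def delta_hat_def E_def mdfa_def S_def)
    have accD: "w \<in> lang D \<longleftrightarrow> delta_hat D (init D) w \<in> accept D"
      using wl by (simp add: lang_def lang_from_def)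
    from dichotomy[OF nr YX wl, of "init D"]
    show "w \<in> U \<union> (\<lambda>(u,v). u @ v) ` (U \<times> Dl)"
    proof (elim disjE exE conjE)
      assume h: "foldl (mtrans D X Y) (redir X Y (init D)) w = redir X Y (delta_hat D (init D) w)"
      show ?thesis
      proof (cases "delta_hat D (init D) w = X")
        case True then show ?thesis using wl by (simp add: U_def)
      next
        case False
        then show ?thesis using h accE accD wd by (auto simp: redir_def)
      qed
    next
      fix u v assume w: "w = u @ v" and u: "delta_hat D (init D) u = X"
        and h: "foldl (mtrans D X Y) (redir X Y (init D)) w = delta_hat D Y v"
      have ul: "u \<in> lists (alpha D)" and vl: "v \<in> lists (alpha D)" using wl w by auto
      have "delta_hat D Y v \<noteq> X" using nr vl by blast
      then have e1: "w \<in> lang E \<longleftrightarrow> v \<in> lang_from D Y"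
        using accE h vl by (simp add: lang_from_def)
      have e2: "w \<in> lang D \<longleftrightarrow> v \<in> lang_from D X"
        using accD w u vl by (simp add: lang_from_def dh_append)
      have "v \<in> Dl" using e1 e2 wd by (auto simp: Dl_def)
      moreover have "u \<in> U" using ul u by (simp add: U_def)
      ultimately show ?thesis using w by blast
    qed
  qed
  have "fequiv (lang D) (lang E)"
    unfolding fequiv_def
    by (rule finite_subset[OF sub]) (use finU finDl in auto)
  obtain E' :: "(nat, 'b) dfa" where E': "is_dfa E'" "alpha E' = alpha E" "lang E' = lang E"
    "card (states E') = card (states E)"
    using to_nat_dfa[OF \<open>is_dfa E\<close>] by blast
  have "card (states D) \<le> card (states E')"
    using fm E' \<open>fequiv (lang D) (lang E)\<close> unfolding f_minimal_def
    by (auto simp: E_def mdfa_def)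
  then show False using cardE E' by simp
qed

theorem mainTheorem9:
  fixes D :: "('q, 'a) dfa" and p q :: 'q
  assumes "f_minimal D"
    and "p \<in> finite_part D"
    and "q \<in> states D"
    and "fequiv (lang_from D p) (lang_from D q)"
  shows "p = q"
proof (rule ccontr)
  assume pq: "p \<noteq> q"
  have D: "is_dfa D" using assms(1) unfolding f_minimal_def by auto
  have pS: "p \<in> states D" using assms(2) unfolding finite_part_def by auto
  have finp: "finite {u \<in> lists (alpha D). delta_hat D (init D) u = p}"
    using assms(2) unfolding finite_part_def by auto
  show False
  proof (cases "\<forall>w\<in>lists (alpha D). delta_hat D q w \<noteq> p")
    case True
    then show False using merge_not_minimal[OF D assms(2) assms(3) pq assms(4)] assms(1) by blast
  next
    case False
    then obtain w where w: "w \<in> lists (alpha D)" "delta_hat D q w = p" by blast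
    have "finite {u \<in> lists (alpha D). delta_hat D (init D) u = q}"
    proof -
      have "(\<lambda>u. u @ w) ` {u \<in> lists (alpha D). delta_hat D (init D) u = q}
             \<subseteq> {u \<in> lists (alpha D). delta_hat D (init D) u = p}"
        using w by (auto simp: dh_append)
      then have "finite ((\<lambda>u. u @ w) ` {u \<in> lists (alpha D). delta_hat D (init D) u = q})"
        using finp finite_subset by blast
      moreover have "inj_on (\<lambda>u. u @ w) {u \<in> lists (alpha D). delta_hat D (init D) u = q}"
        by (auto simp: inj_on_def)
      ultimately show ?thesis using finite_imageD by blast
    qed
    then have qF: "q \<in> finite_part D" using assms(3) unfolding finite_part_def by auto
    have nr: "\<forall>w'\<in>lists (alpha D). delta_hat D p w' \<noteq> q"
    proof (rule ccontr)
      assume "\<not> (\<forall>w'\<in>lists (alpha D). delta_hat D p w' \<noteq> q)"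
      then obtain w' where w': "w' \<in> lists (alpha D)" "delta_hat D p w' = q" by blast
      define z where "z = w' @ w"
      have zl: "z \<in> lists (alpha D)" using w w' by (simp add: z_def)
      have zp: "delta_hat D p z = p" using w w' by (simp add: z_def dh_append)
      have zne: "z \<noteq> []" using w' pq by (auto simp: z_def)
      obtain u0 where u0: "u0 \<in> lists (alpha D)" "delta_hat D (init D) u0 = p"
        using D pS unfolding is_dfa_def by blast
      have pw: "delta_hat D p (concat (replicate n z)) = p" for n
        by (induction n) (simp_all add: dh_append zp)
      have cl: "concat (replicate n z) \<in> lists (alpha D)" for n
        using zl by (induction n) auto
      have "range (\<lambda>n. u0 @ concat (replicate n z)) \<subseteq> {u \<in> lists (alpha D). delta_hat D (init D) u = p}"
        using u0 pw cl zl by (auto simp: dh_append)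
      moreover have "inj (\<lambda>n. u0 @ concat (replicate n z))"
      proof (rule injI)
        fix m n assume "u0 @ concat (replicate m z) = u0 @ concat (replicate n z)"
        then have "length (concat (replicate m z)) = length (concat (replicate n z))" by simp
        then have "m * length z = n * length z" by (simp add: length_concat sum_list_replicate)
        then show "m = n" using zne by simp
      qed
      ultimately have "infinite {u \<in> lists (alpha D). delta_hat D (init D) u = p}"
        by (meson finite_imageD finite_subset infinite_UNIV_nat)
      then show False using finp by simp
    qed
    have eq': "fequiv (lang_from D q) (lang_from D p)"
      using assms(4) unfolding fequiv_def by (simp add: Un_commute)
    have "q \<noteq> p" using pq by simp
    then show False using merge_not_minimal[OF D qF pS _ eq' nr] assms(1) by blast
  qed
qed

end
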